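(* Let $X$ be a real Banach space and let $T\subset X\times X^*$ be a maximal monotone operator which is a linear subspace of $X\times X^*$. Then (1) $T^\vdash\subset\{(x,x^* )\mid \varphi_T(x,x^* )=0\}$; (2) $T\cap T^\vdash=T\cap\{(x,x^* )\mid \langle x,x^*\rangle=0\}$.
   Context: $\langle x,x^*\rangle=x^*(x)$. Operators $X\rightrightarrows X^*$ are identified with subsets of $X\times X^*$; $T$ is monotone if $\langle x-y,x^*-y^*\rangle\ge0$ for all $(x,x^* ),(y,y^* )\in T$, maximal monotone if moreover it is maximal under inclusion among monotone operators. The Fitzpatrick function of $T$ is $\varphi_T(x,x^* )=\sup_{(y,y^* )\in T}\big(\langle x,y^*\rangle+\langle y,x^*\rangle-\langle y,y^*\rangle\big)$. For $B\subset X\times X^*$, $B^\vdash=\{(y,y^* )\mid \langle x,y^*\rangle+\langle y,x^*\rangle=0\ \forall (x,x^* )\in B\}$. *)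

theory Defs
  imports "HOL-Analysis.Analysis"
begin

text \<open>The dual X* of a real Banach space X is the space of bounded linear
functionals X \<Rightarrow>L real; the duality pairing is evaluation.\<close>

definition pairing :: "'a::real_normed_vector \<Rightarrow> ('a \<Rightarrow>\<^sub>L real) \<Rightarrow> real" where
  "pairing x xs = blinfun_apply xs x"

definition monotone_op :: "('a::real_normed_vector \<times> ('a \<Rightarrow>\<^sub>L real)) set \<Rightarrow> bool" where
  "monotone_op T \<longleftrightarrow>
     (\<forall>(x, xs)\<in>T. \<forall>(y, ys)\<in>T. pairing (x - y) (xs - ys) \<ge> 0)"

definition maximal_monotone :: "('a::real_normed_vector \<times> ('a \<Rightarrow>\<^sub>L real)) set \<Rightarrow> bool" where
  "maximal_monotone T \<longleftrightarrow> monotone_op T \<and> (\<forall>S. monotone_op S \<and> T \<subseteq> S \<longrightarrow> S = T)"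

text \<open>Fitzpatrick function, valued in the extended reals (supremum may be infinite).\<close>
definition fitzpatrick :: "('a::real_normed_vector \<times> ('a \<Rightarrow>\<^sub>L real)) set \<Rightarrow> 'a \<Rightarrow> ('a \<Rightarrow>\<^sub>L real) \<Rightarrow> ereal" where
  "fitzpatrick T x xs =
     (SUP p\<in>T. ereal (pairing x (snd p) + pairing (fst p) xs - pairing (fst p) (snd p)))"

definition perp_op :: "('a::real_normed_vector \<times> ('a \<Rightarrow>\<^sub>L real)) set \<Rightarrow> ('a \<times> ('a \<Rightarrow>\<^sub>L real)) set" where
  "perp_op B = {(y, ys). \<forall>(x, xs)\<in>B. pairing x ys + pairing y xs = 0}"

end

theory Submission
  imports Defs
begin

lemma pair_lin:
  "pairing (x + t *\<^sub>R y) (xs + t *\<^sub>R ys) =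
   pairing x xs + t * (pairing x ys + pairing y xs) + t * t * pairing y ys"
  unfolding pairing_def
  by (simp add: blinfun.add_left blinfun.add_right blinfun.scaleR_left blinfun.scaleR_right algebra_simps)

lemma quad_zero:
  fixes a b :: real
  assumes "b \<ge> 0" "\<And>t. a * t + b * t * t \<ge> 0"
  shows "a = 0"
proof (rule ccontr)
  assume "a \<noteq> 0"
  define t where "t = - a / (b + 1)"
  have "a * t + b * t * t = - a * a / ((b+1)*(b+1))"
  proof -
    have bp: "b + 1 \<noteq> 0" using assms(1) by linarith
    show ?thesis unfolding t_def using bp
      by (simp add: divide_simps) (simp add: algebra_simps)
  qed
  also have "\<dots> < 0" using \<open>a \<noteq> 0\<close> assms(1)
  proof -
    have "0 < a * a" using \<open>a \<noteq> 0\<close> by (simp add: zero_less_mult_iff) linarith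
    moreover have "0 < (b+1)*(b+1)" using assms(1) by simp
    ultimately have "0 < a * a / ((b+1)*(b+1))" by (rule divide_pos_pos)
    then show ?thesis by simp
  qed
  finally show False using assms(2)[of t] by linarith
qed

theorem lemma1:
  fixes T :: "('a::banach \<times> ('a \<Rightarrow>\<^sub>L real)) set"
  assumes "maximal_monotone T"
    and "subspace T"
  shows "perp_op T \<subseteq> {(x, xs). fitzpatrick T x xs = 0} \<and>
         T \<inter> perp_op T = T \<inter> {(x, xs). pairing x xs = 0}"
proof -
  have mono: "monotone_op T" using assms(1) maximal_monotone_def by blast
  have z: "(0, 0) \<in> T" using assms(2) subspace_0 by (metis zero_prod_def)
  have pos: "pairing x xs \<ge> 0" if "(x, xs) \<in> T" for x xs
    using mono that z unfolding monotone_op_def by fastforce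
  have P1: "perp_op T \<subseteq> {(x, xs). fitzpatrick T x xs = 0}"
  proof safe
    fix y ys assume yp: "(y, ys) \<in> perp_op T"
    have le: "ereal (pairing y (snd p) + pairing (fst p) ys - pairing (fst p) (snd p)) \<le> 0"
      if "p \<in> T" for p
    proof -
      obtain x xs where p: "p = (x, xs)" by fastforce
      have "pairing x ys + pairing y xs = 0" using yp that p unfolding perp_op_def by auto
      moreover have "pairing x xs \<ge> 0" using pos that p by auto
      ultimately show ?thesis using p by simp
    qed
    have "fitzpatrick T y ys \<le> 0" unfolding fitzpatrick_def
      by (rule SUP_least) (use le in auto)
    moreover have "fitzpatrick T y ys \<ge> 0" unfolding fitzpatrick_def
      using z by (intro SUP_upper2[of "(0,0)"]) (auto simp: pairing_def)
    ultimately show "fitzpatrick T y ys = 0" by simp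
  qed
  have P2: "T \<inter> perp_op T = T \<inter> {(x, xs). pairing x xs = 0}"
  proof safe
    fix x xs assume "(x, xs) \<in> T" "(x, xs) \<in> perp_op T"
    then have "pairing x xs + pairing x xs = 0" unfolding perp_op_def by auto
    then show "pairing x xs = 0" by simp
  next
    fix x xs assume xT: "(x, xs) \<in> T" and q0: "pairing x xs = 0"
    show "(x, xs) \<in> perp_op T" unfolding perp_op_def
    proof (clarsimp)
      fix y ys assume yT: "(y, ys) \<in> T"
      have "pairing y xs + pairing x ys = 0"
      proof (rule quad_zero)
        show "0 \<le> pairing y ys" using pos yT .
        fix t :: real
        have "t *\<^sub>R (y, ys) \<in> T" using assms(2) yT by (rule subspace_scale)
        then have "(x, xs) + t *\<^sub>R (y, ys) \<in> T"
          using assms(2) xT by (intro subspace_add)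
        then have "(x + t *\<^sub>R y, xs + t *\<^sub>R ys) \<in> T" by simp
        from pos[OF this] show "0 \<le> (pairing y xs + pairing x ys) * t + pairing y ys * t * t"
          unfolding pair_lin q0 by (simp add: algebra_simps)
      qed
      then show "pairing y xs + pairing x ys = 0" .
    qed
  qed
  show ?thesis using P1 P2 by blast
qed

end
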